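(* Let $w\in F$ and suppose $w=a_1a_2\cdots a_k$ with $k\ge1$, where for each $i$ either $a_i$ or $a_i^{-1}$ belongs to $\{x_0,x_1,x_2,\dots\}$, and suppose that for each $i<k$, if $a_i=x_r^{\pm1}$ then $a_{i+1}=x_{r+1}^{\pm1}$ or $a_{i+1}=x_{r-1}^{\pm1}$. Then $w\neq 1$ in $F$.
   Context: $F$ is Thompson's group with infinite presentation $\langle x_k,\ k\ge0 \mid x_i^{-1}x_jx_i=x_{j+1}\text{ for } i<j\rangle$. *)

theory Defs
  imports Main
begin

text \<open>Thompson's group F given by the infinite presentation
  < x_k (k >= 0) | x_i^-1 x_j x_i = x_(j+1) for i < j >.
  A letter is a pair (r, s): (r, True) stands for x_r and (r, False) for x_r^-1.
  Elements of F are words modulo the congruence generated by free cancellation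
  and the defining relations.\<close>

type_synonym letter = "nat \<times> bool"
type_synonym word = "letter list"

inductive F_eq :: "word \<Rightarrow> word \<Rightarrow> bool" where
  cancel: "F_eq [(n, b), (n, \<not> b)] []"
| rel: "i < j \<Longrightarrow> F_eq [(i, False), (j, True), (i, True)] [(Suc j, True)]"
| refl: "F_eq u u"
| sym: "F_eq u v \<Longrightarrow> F_eq v u"
| trans: "F_eq u v \<Longrightarrow> F_eq v w \<Longrightarrow> F_eq u w"
| ctx: "F_eq u v \<Longrightarrow> F_eq (p @ u @ q) (p @ v @ q)"

definition F_trivial :: "word \<Rightarrow> bool" where
  "F_trivial w \<longleftrightarrow> F_eq w []"

end

theory Submission
  imports Defs
begin

section \<open>An action of F on infinite binary sequences\<close>

definition cns :: "bool \<Rightarrow> (nat \<Rightarrow> bool) \<Rightarrow> nat \<Rightarrow> bool" where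
  "cns b f = case_nat b f"

lemma cns_0[simp]: "cns b f 0 = b" by (simp add: cns_def)
lemma cns_Suc[simp]: "cns b f (Suc n) = f n" by (simp add: cns_def)
lemma cns_comp[simp]: "cns b f \<circ> Suc = f" by (auto simp: fun_eq_iff cns_def)
lemma cns_eta: "f 0 = b \<Longrightarrow> cns b (f \<circ> Suc) = f"
  by (auto simp: fun_eq_iff cns_def split: nat.split)

definition g0 :: "(nat \<Rightarrow> bool) \<Rightarrow> nat \<Rightarrow> bool" where
  "g0 f = (if f 0 then cns True (cns True (f \<circ> Suc))
           else if f (Suc 0) then cns True (cns False (f \<circ> Suc \<circ> Suc))
           else cns False (f \<circ> Suc \<circ> Suc))"

definition g1 :: "(nat \<Rightarrow> bool) \<Rightarrow> nat \<Rightarrow> bool" where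
  "g1 f = (if \<not> f 0 then cns False (cns False (f \<circ> Suc))
           else if \<not> f (Suc 0) then cns False (cns True (f \<circ> Suc \<circ> Suc))
           else cns True (f \<circ> Suc \<circ> Suc))"

lemma g1g0: "g1 (g0 f) = f"
  by (auto simp: g0_def g1_def fun_eq_iff cns_def split: nat.split)

lemma g0g1: "g0 (g1 f) = f"
  by (auto simp: g0_def g1_def fun_eq_iff cns_def split: nat.split)

fun lift :: "nat \<Rightarrow> ((nat \<Rightarrow> bool) \<Rightarrow> (nat \<Rightarrow> bool)) \<Rightarrow> (nat \<Rightarrow> bool) \<Rightarrow> (nat \<Rightarrow> bool)" where
  "lift 0 h f = h f"
| "lift (Suc n) h f = (if f 0 then cns True (lift n h (f \<circ> Suc)) else f)"

lemma lift_comp: "lift n h (lift n h' f) = lift n (h \<circ> h') f"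
  by (induction n arbitrary: f) auto

lemma lift_id: "lift n id f = f"
  by (induction n arbitrary: f) (auto simp: cns_eta)

lemma lift_add: "lift (i + k) h f = lift i (lift k h) f"
  by (induction i arbitrary: f) auto

lemma key: "g0 (lift (Suc k) h (g1 f)) = lift (Suc (Suc k)) h f"
  by (auto simp: g0_def g1_def cns_eta)

fun act :: "word \<Rightarrow> (nat \<Rightarrow> bool) \<Rightarrow> (nat \<Rightarrow> bool)" where
  "act [] f = f"
| "act (x # r) f = act r (lift (fst x) (if snd x then g0 else g1) f)"

lemma act_append: "act (u @ v) f = act v (act u f)"
  by (induction u arbitrary: f) auto

lemma act_inv: "F_eq u v \<Longrightarrow> act u = act v"
proof (induction rule: F_eq.induct)
  case (cancel n b)
  have e1: "g1 \<circ> g0 = id" "g0 \<circ> g1 = id" by (auto simp: fun_eq_iff g0g1 g1g0)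
  show ?case
  proof (rule ext)
    fix f
    show "act [(n, b), (n, \<not> b)] f = act [] f"
      using e1 by (cases b) (simp_all add: lift_comp lift_id)
  qed
next
  case (rel i j)
  then obtain k where j: "j = i + Suc k" by (metis less_iff_Suc_add add.commute add_Suc_right)
  have e: "g0 \<circ> (lift (Suc k) g0 \<circ> g1) = lift (Suc (Suc k)) g0"
    by (simp add: fun_eq_iff key del: lift.simps)
  have jl: "lift j g0 = lift i (lift (Suc k) g0)" by (rule ext) (simp only: j lift_add)
  have jl2: "lift (Suc j) g0 = lift i (lift (Suc (Suc k)) g0)"
    by (rule ext) (simp only: j lift_add[symmetric] add_Suc_right)
  show ?case
  proof (rule ext)
    fix f
    have "act [(i, False), (j, True), (i, True)] f
        = lift i g0 (lift i (lift (Suc k) g0) (lift i g1 f))"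
      by (simp add: jl)
    also have "\<dots> = lift i (g0 \<circ> (lift (Suc k) g0 \<circ> g1)) f" by (simp add: lift_comp)
    also have "\<dots> = lift i (lift (Suc (Suc k)) g0) f" by (simp add: e)
    also have "\<dots> = act [(Suc j, True)] f" by (simp add: jl2)
    finally show "act [(i, False), (j, True), (i, True)] f = act [(Suc j, True)] f" .
  qed
next
  case (ctx u v p q)
  show ?case by (rule ext) (simp add: act_append ctx.IH)
qed auto

fun pre :: "nat \<Rightarrow> (nat \<Rightarrow> bool) \<Rightarrow> nat \<Rightarrow> bool" where
  "pre 0 f = f"
| "pre (Suc n) f = cns True (pre n f)"

lemma lift_pre: "lift n h (pre n f) = pre n (h f)"
  by (induction n) auto

lemma lift_pre_gt: "m < n \<Longrightarrow> f 0 = False \<Longrightarrow> lift n h (pre m f) = pre m f"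
proof (induction m arbitrary: n)
  case 0
  then obtain n' where "n = Suc n'" by (cases n) auto
  with 0 show ?case by simp
next
  case (Suc m)
  then obtain n' where n: "n = Suc n'" by (cases n) auto
  have "lift n' h (pre m f) = pre m f" using Suc.IH[of n'] Suc.prems n by simp
  then show ?case using n by simp
qed

lemma pre_at: "pre m f (m + k) = f k"
  by (induction m) auto

lemma g0_pt: "g0 (\<lambda>k. k = Suc (Suc K)) = (\<lambda>k. k = Suc K)"
  by (auto simp: g0_def fun_eq_iff cns_def split: nat.split)

lemma g1_pt: "g1 (\<lambda>k. k = Suc K) = (\<lambda>k. k = Suc (Suc K))"
  by (auto simp: g1_def fun_eq_iff cns_def split: nat.split)

fun ex :: "nat \<Rightarrow> word \<Rightarrow> int" where
  "ex m [] = 0"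
| "ex m (x # r) = (if fst x = m then (if snd x then 1 else -1) else 0) + ex m r"

lemma step_g0: "x = (n,b) \<Longrightarrow> b \<Longrightarrow> n = m \<Longrightarrow> K = Suc (Suc K2) \<Longrightarrow>
  act (x # r) (pre m (\<lambda>k. k = K)) = act r (pre m (\<lambda>k. k = Suc K2))"
  by (simp add: lift_pre g0_pt)

lemma step_g1: "x = (n,b) \<Longrightarrow> \<not> b \<Longrightarrow> n = m \<Longrightarrow> K = Suc K2 \<Longrightarrow>
  act (x # r) (pre m (\<lambda>k. k = K)) = act r (pre m (\<lambda>k. k = Suc K))"
  by (simp add: lift_pre g1_pt)

lemma step_gt: "x = (n,b) \<Longrightarrow> m < n \<Longrightarrow> K \<noteq> 0 \<Longrightarrow>
  act (x # r) (pre m (\<lambda>k. k = K)) = act r (pre m (\<lambda>k. k = K))"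
  by (simp add: lift_pre_gt)

lemma act_pt:
  "(\<forall>x\<in>set w. m \<le> fst x) \<Longrightarrow> length w + 2 \<le> K \<Longrightarrow>
    \<exists>K'. int K' = int K - ex m w \<and> act w (pre m (\<lambda>k. k = K)) = pre m (\<lambda>k. k = K')"
proof (induction w arbitrary: K)
  case Nil
  then show ?case by auto
next
  case (Cons x r)
  obtain n b where x: "x = (n, b)" by (cases x)
  have hr: "\<forall>x\<in>set r. m \<le> fst x" using Cons.prems(1) by simp
  have hn: "m \<le> n" using Cons.prems(1) x by simp
  have lenK: "length r + 3 \<le> K" using Cons.prems(2) by simp
  show ?case
  proof (cases "n = m")
    case True
    show ?thesis
    proof (cases b)
      case True
      have "\<exists>K2. K = Suc (Suc K2)" using lenK by presburger
      then obtain K2 where K: "K = Suc (Suc K2)" by blast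
      have a1: "act (x # r) (pre m (\<lambda>k. k = K)) = act r (pre m (\<lambda>k. k = Suc K2))"
        by (rule step_g0[OF x True \<open>n = m\<close> K])
      have "length r + 2 \<le> Suc K2" using lenK K by simp
      then obtain K' where k1: "int K' = int (Suc K2) - ex m r"
        and k2: "act r (pre m (\<lambda>k. k = Suc K2)) = pre m (\<lambda>k. k = K')"
        using Cons.IH[OF hr] by blast
      have "int K' = int K - ex m (x # r)" using k1 K True \<open>n = m\<close> x by simp
      moreover have "act (x # r) (pre m (\<lambda>k. k = K)) = pre m (\<lambda>k. k = K')"
        using a1 k2 by (rule HOL.trans)
      ultimately show ?thesis by (intro exI[of _ K'] conjI)
    next
      case False
      have a1: "act (x # r) (pre m (\<lambda>k. k = K)) = act r (pre m (\<lambda>k. k = Suc K))"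
      proof -
        obtain K2 where K: "K = Suc K2" using lenK by (cases K) auto
        show ?thesis by (rule step_g1[OF x False \<open>n = m\<close> K])
      qed
      have "length r + 2 \<le> Suc K" using lenK by simp
      then obtain K' where k1: "int K' = int (Suc K) - ex m r"
        and k2: "act r (pre m (\<lambda>k. k = Suc K)) = pre m (\<lambda>k. k = K')"
        using Cons.IH[OF hr] by blast
      have "int K' = int K - ex m (x # r)" using k1 False \<open>n = m\<close> x by simp
      moreover have "act (x # r) (pre m (\<lambda>k. k = K)) = pre m (\<lambda>k. k = K')"
        using a1 k2 by (rule HOL.trans)
      ultimately show ?thesis by (intro exI[of _ K'] conjI)
    qed
  next
    case False
    then have "m < n" using hn by simp
    moreover have "K \<noteq> 0" using lenK by simp
    ultimately have a1: "act (x # r) (pre m (\<lambda>k. k = K)) = act r (pre m (\<lambda>k. k = K))"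
      by (rule step_gt[OF x])
    have "length r + 2 \<le> K" using lenK by simp
    then obtain K' where k1: "int K' = int K - ex m r"
        and k2: "act r (pre m (\<lambda>k. k = K)) = pre m (\<lambda>k. k = K')"
      using Cons.IH[OF hr] by blast
    have "int K' = int K - ex m (x # r)" using k1 False x by simp
    moreover have "act (x # r) (pre m (\<lambda>k. k = K)) = pre m (\<lambda>k. k = K')"
        using a1 k2 by (rule HOL.trans)
      ultimately show ?thesis by (intro exI[of _ K'] conjI)
  qed
qed

lemma base:
  assumes "\<forall>x\<in>set w. m \<le> fst x" "ex m w \<noteq> 0"
  shows "\<not> F_eq w []"
proof
  assume "F_eq w []"
  then have A: "act w = act []" by (rule act_inv)
  obtain K' where K': "int K' = int (length w + 2) - ex m w"
    "act w (pre m (\<lambda>k. k = length w + 2)) = pre m (\<lambda>k. k = K')"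
    using act_pt[OF assms(1), of "length w + 2"] by blast
  then have "pre m (\<lambda>k. k = length w + 2) = pre m (\<lambda>k. k = K')" using A by simp
  then have "pre m (\<lambda>k. k = length w + 2) (m + (length w + 2)) = pre m (\<lambda>k. k = K') (m + (length w + 2))"
    by simp
  then have "K' = length w + 2" unfolding pre_at by simp
  with K' assms(2) show False by simp
qed

definition inv :: "word \<Rightarrow> word" where
  "inv w = rev (map (\<lambda>(n, b). (n, \<not> b)) w)"

lemma inv_Nil[simp]: "inv [] = []" by (simp add: inv_def)
lemma inv_Cons[simp]: "inv ((n, b) # w) = inv w @ [(n, \<not> b)]" by (simp add: inv_def)
lemma inv_inv[simp]: "inv (inv w) = w"
  by (induction w) (auto simp: inv_def rev_map comp_def split: prod.splits)

lemma F_ctxL: "F_eq u v \<Longrightarrow> F_eq (p @ u) (p @ v)"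
  using F_eq.ctx[of u v p "[]"] by simp
lemma F_ctxR: "F_eq u v \<Longrightarrow> F_eq (u @ q) (v @ q)"
  using F_eq.ctx[of u v "[]" q] by simp

lemma winv: "F_eq (w @ inv w) []"
proof (induction w)
  case Nil
  then show ?case by (simp add: F_eq.refl)
next
  case (Cons x w)
  obtain n b where x: "x = (n, b)" by (cases x)
  have "F_eq ([x] @ (w @ inv w) @ [(n, \<not> b)]) ([x] @ [] @ [(n, \<not> b)])"
    by (rule F_eq.ctx[OF Cons])
  then have "F_eq ((x # w) @ inv (x # w)) [(n, b), (n, \<not> b)]" using x by simp
  then show ?case using F_eq.cancel by (rule F_eq.trans)
qed

lemma invw: "F_eq (inv w @ w) []"
  using winv[of "inv w"] by simp

lemma F_inv: "F_eq A B \<Longrightarrow> F_eq (inv A) (inv B)"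
proof -
  assume AB: "F_eq A B"
  have 1: "F_eq (inv A @ (B @ inv B) @ []) (inv A @ [] @ [])" by (rule F_eq.ctx[OF winv])
  have 2: "F_eq (inv A @ B @ inv B) (inv A @ A @ inv B)" by (rule F_eq.ctx[OF F_eq.sym[OF AB]])
  have 3: "F_eq ([] @ (inv A @ A) @ inv B) ([] @ [] @ inv B)" by (rule F_eq.ctx[OF invw])
  from 1 have a: "F_eq (inv A) (inv A @ B @ inv B)" by (simp add: F_eq.sym)
  from 3 have c: "F_eq (inv A @ A @ inv B) (inv B)" by simp
  show ?thesis by (rule F_eq.trans[OF F_eq.trans[OF a 2] c])
qed

lemma rel_gen: "m < p \<Longrightarrow> F_eq [(m, False), (p, b), (m, True)] [(Suc p, b)]"
proof (cases b)
  case True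
  assume "m < p" then show ?thesis using True F_eq.rel by simp
next
  case False
  assume "m < p"
  then have "F_eq (inv [(m, False), (p, True), (m, True)]) (inv [(Suc p, True)])"
    by (rule F_inv[OF F_eq.rel])
  then show ?thesis using False by simp
qed

lemma swap: "m < p \<Longrightarrow> F_eq [(m, False), (p, b)] [(Suc p, b), (m, False)]"
proof -
  assume mp: "m < p"
  have c: "F_eq [(m, True), (m, False)] []" using F_eq.cancel[of m True] by simp
  have "F_eq ([(m, False), (p, b)] @ [(m, True), (m, False)]) ([(m, False), (p, b)] @ [])"
    by (rule F_ctxL[OF c])
  then have 1: "F_eq [(m, False), (p, b)] ([(m, False), (p, b), (m, True)] @ [(m, False)])"
    by (simp add: F_eq.sym)
  have 2: "F_eq ([(m, False), (p, b), (m, True)] @ [(m, False)]) ([(Suc p, b)] @ [(m, False)])"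
    by (rule F_ctxR[OF rel_gen[OF mp]])
  have "F_eq [(m, False), (p, b)] ([(Suc p, b)] @ [(m, False)])" by (rule F_eq.trans[OF 1 2])
  then show ?thesis by simp
qed

lemma pushR: "m < n \<Longrightarrow> F_eq (replicate s (m, False) @ [(n, b)]) ((n + s, b) # replicate s (m, False))"
proof (induction s)
  case 0
  then show ?case by (simp add: F_eq.refl)
next
  case (Suc s)
  have 1: "F_eq ([(m, False)] @ (replicate s (m, False) @ [(n, b)])) ([(m, False)] @ ((n + s, b) # replicate s (m, False)))"
    by (rule F_ctxL[OF Suc.IH[OF Suc.prems]])
  have "m < n + s" using Suc by simp
  then have sw: "F_eq [(m, False), (n + s, b)] [(Suc (n + s), b), (m, False)]" by (rule swap)
  have 2: "F_eq ([(m, False), (n + s, b)] @ replicate s (m, False)) ([(Suc (n + s), b), (m, False)] @ replicate s (m, False))"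
    by (rule F_ctxR[OF sw])
  have h1': "F_eq (replicate (Suc s) (m, False) @ [(n, b)]) ([(m, False), (n + s, b)] @ replicate s (m, False))"
    using 1 by (simp only: replicate_Suc append_Cons append_Nil)
  have "F_eq (replicate (Suc s) (m, False) @ [(n, b)]) ([(Suc (n + s), b), (m, False)] @ replicate s (m, False))"
    by (rule F_eq.trans[OF h1' 2])
  then show ?case by simp
qed

fun sh :: "nat \<Rightarrow> nat \<Rightarrow> word \<Rightarrow> word" where
  "sh m s [] = []"
| "sh m s (x # r) = (if fst x = m then sh m (if snd x then s - 1 else Suc s) r
                     else (fst x + s, snd x) # sh m s r)"

fun fin :: "nat \<Rightarrow> nat \<Rightarrow> word \<Rightarrow> nat" where
  "fin m s [] = s"
| "fin m s (x # r) = (if fst x = m then fin m (if snd x then s - 1 else Suc s) r else fin m s r)"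

lemma rep_aux: "replicate s x @ x # ys = x # replicate s x @ ys"
  by (induction s) auto

lemma conj:
  "(\<forall>x\<in>set w. m \<le> fst x) \<Longrightarrow> length w \<le> s \<Longrightarrow>
    F_eq (replicate s (m, False) @ w) (sh m s w @ replicate (fin m s w) (m, False))"
proof (induction w arbitrary: s)
  case Nil
  then show ?case by (simp add: F_eq.refl)
next
  case (Cons x r)
  obtain n b where x: "x = (n, b)" by (cases x)
  show ?case
  proof (cases "n = m")
    case False
    then have mn: "m < n" using Cons.prems x by force
    have 1: "F_eq ((replicate s (m, False) @ [(n, b)]) @ r) (((n + s, b) # replicate s (m, False)) @ r)"
      using F_ctxR pushR[OF mn] by blast
    have 2: "F_eq ([(n + s, b)] @ (replicate s (m, False) @ r)) ([(n + s, b)] @ (sh m s r @ replicate (fin m s r) (m, False)))"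
    proof -
      have "F_eq (replicate s (m, False) @ r) (sh m s r @ replicate (fin m s r) (m, False))"
        using Cons.IH Cons.prems by auto
      then show ?thesis using F_ctxL by blast
    qed
    have h1': "F_eq (replicate s (m, False) @ x # r) ([(n + s, b)] @ (replicate s (m, False) @ r))"
      using 1 x by simp
    have "F_eq (replicate s (m, False) @ x # r) ([(n + s, b)] @ (sh m s r @ replicate (fin m s r) (m, False)))"
      by (rule F_eq.trans[OF h1' 2])
    then show ?thesis using x False by simp
  next
    case True
    show ?thesis
    proof (cases b)
      case True
      obtain s' where s: "s = Suc s'" using Cons.prems by (cases s) auto
      have 1: "F_eq (replicate s' (m, False) @ [(m, False), (m, \<not> False)] @ r) (replicate s' (m, False) @ [] @ r)"
        by (rule F_eq.ctx[OF F_eq.cancel])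
      have 2: "F_eq (replicate s' (m, False) @ r) (sh m s' r @ replicate (fin m s' r) (m, False))"
        using Cons.IH[of s'] Cons.prems s by auto
      have e: "replicate s (m, False) @ x # r = replicate s' (m, False) @ [(m, False), (m, \<not> False)] @ r"
        using s x True \<open>n = m\<close> by (simp add: rep_aux)
      have h1': "F_eq (replicate s (m, False) @ x # r) (replicate s' (m, False) @ r)"
        using 1 unfolding e by simp
      have e2: "sh m s (x # r) = sh m s' r" "fin m s (x # r) = fin m s' r"
        using x True \<open>n = m\<close> s by simp_all
      show ?thesis unfolding e2 by (rule F_eq.trans[OF h1' 2])
    next
      case False
      have e1: "replicate s (m, False) @ x # r = replicate (Suc s) (m, False) @ r"
        using x False \<open>n = m\<close> by (simp add: rep_aux)
      have F: "F_eq (replicate (Suc s) (m, False) @ r) (sh m (Suc s) r @ replicate (fin m (Suc s) r) (m, False))"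
        using Cons.IH[of "Suc s"] Cons.prems by simp
      have e2: "sh m s (x # r) = sh m (Suc s) r" "fin m s (x # r) = fin m (Suc s) r"
        using x False \<open>n = m\<close> by simp_all
      show ?thesis unfolding e1 e2 by (rule F)
    qed
  qed
qed

lemma fin_eq: "length w \<le> s \<Longrightarrow> int (fin m s w) = int s - ex m w"
  by (induction w arbitrary: s) auto

lemma sh_len: "length (sh m s w) = length (filter (\<lambda>x. fst x \<noteq> m) w)"
  by (induction w arbitrary: s) auto

fun chain :: "word \<Rightarrow> bool" where
  "chain [] = True"
| "chain [x] = True"
| "chain (x # y # r) = ((fst y = fst x + 1 \<or> fst y + 1 = fst x) \<and> chain (y # r))"

lemma chain_Cons: "t \<noteq> [] \<Longrightarrow> chain (a # t) = ((fst (hd t) = fst a + 1 \<or> fst (hd t) + 1 = fst a) \<and> chain t)"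
  by (cases t) auto

lemma chain_nth:
  "(\<And>i. Suc i < length a \<Longrightarrow> fst (a ! Suc i) = fst (a ! i) + 1 \<or> fst (a ! Suc i) + 1 = fst (a ! i)) \<Longrightarrow> chain a"
proof (induction a rule: chain.induct)
  case (3 x y r)
  have "chain (y # r)"
  proof (rule 3(1))
    fix i assume "Suc i < length (y # r)"
    then show "fst ((y # r) ! Suc i) = fst ((y # r) ! i) + 1 \<or> fst ((y # r) ! Suc i) + 1 = fst ((y # r) ! i)"
      using 3(2)[of "Suc i"] by simp
  qed
  moreover have "fst y = fst x + 1 \<or> fst y + 1 = fst x" using 3(2)[of 0] by simp
  ultimately show ?case by simp
qed auto

lemma sh_chain:
  "chain w \<Longrightarrow> (\<forall>x\<in>set w. m \<le> fst x) \<Longrightarrow> length w \<le> s \<Longrightarrow>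
   chain (sh m s w) \<and> (sh m s w \<noteq> [] \<longrightarrow> fst (hd (sh m s w)) =
      (if fst (hd w) = m then Suc m + (if snd (hd w) then s - 1 else Suc s) else fst (hd w) + s))"
proof (induction w arbitrary: s)
  case Nil
  then show ?case by simp
next
  case (Cons x r)
  show ?case
  proof (cases r)
    case Nil
    then show ?thesis by auto
  next
    case (Cons y r')
    have adj: "fst y = fst x + 1 \<or> fst y + 1 = fst x" and cr: "chain r"
      using Cons.prems Cons by auto
    show ?thesis
    proof (cases "fst x = m")
      case True
      have "m \<le> fst y" using Cons.prems Cons by auto
      then have y: "fst y = Suc m" using adj True by arith
      let ?s = "if snd x then s - 1 else Suc s"
      have "length r \<le> ?s" using Cons.prems by auto
      then have IH: "chain (sh m ?s r) \<and> (sh m ?s r \<noteq> [] \<longrightarrow> fst (hd (sh m ?s r)) = fst y + ?s)"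
        using Cons.IH[of ?s] cr Cons.prems Cons y by auto
      then show ?thesis using True y by auto
    next
      case False
      have IH: "chain (sh m s r) \<and> (sh m s r \<noteq> [] \<longrightarrow> fst (hd (sh m s r)) =
        (if fst y = m then Suc m + (if snd y then s - 1 else Suc s) else fst y + s))"
        using Cons.IH[of s] cr Cons.prems Cons by auto
      have s2: "2 \<le> s" using Cons.prems Cons by auto
      have "chain ((fst x + s, snd x) # sh m s r)"
      proof (cases "sh m s r = []")
        case True then show ?thesis by simp
      next
        case ne: False
        have "fst (hd (sh m s r)) = fst x + s + 1 \<or> fst (hd (sh m s r)) + 1 = fst x + s"
        proof (cases "fst y = m")
          case True
          moreover have "m \<le> fst x" using Cons.prems by auto
          ultimately have "fst x = Suc m" using adj False by arith
          then show ?thesis using IH ne True s2 by auto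
        next
          case False
          then show ?thesis using IH ne adj by auto
        qed
        then show ?thesis using chain_Cons[OF ne] IH by simp
      qed
      then show ?thesis using False by auto
    qed
  qed
qed

lemma main_lem: "\<forall>w. length w = N \<longrightarrow> chain w \<longrightarrow> w \<noteq> [] \<longrightarrow> \<not> F_eq w []"
proof (induction N rule: less_induct)
  case (less N)
  show ?case
  proof (intro allI impI notI)
    fix w assume len: "length w = N" and ch: "chain w" and ne: "w \<noteq> []" and triv: "F_eq w []"
    define m where "m = Min (fst ` set w)"
    have hm: "\<forall>x\<in>set w. m \<le> fst x" unfolding m_def by auto
    have min_in: "m \<in> fst ` set w" unfolding m_def using ne by auto
    show False
    proof (cases "ex m w = 0")
      case False
      then show False using base[OF hm False] triv by simp
    next
      case True
      obtain x y r where w: "w = x # y # r"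
      proof (cases w)
        case Nil then show ?thesis using ne by simp
      next
        case (Cons x t)
        show ?thesis
        proof (cases t)
          case Nil
          then have "fst x = m" using min_in Cons by auto
          then have "ex m w \<noteq> 0" using Cons Nil by auto
          then show ?thesis using True by simp
        next
          case (Cons y r)
          then show ?thesis using that \<open>w = x # t\<close> by simp
        qed
      qed
      define s where "s = length w"
      define R where "R = replicate s (m, False)"
      have "int (fin m s w) = int s" using fin_eq[of w s m] True s_def by simp
      then have fs: "fin m s w = s" by simp
      have C: "F_eq (R @ w) (sh m s w @ R)" using conj[OF hm, of s] fs R_def s_def by simp
      have "F_eq (R @ w) (R @ [])" by (rule F_ctxL[OF triv])
      then have "F_eq (R @ w) R" by simp
      then have "F_eq (sh m s w @ R) R" by (rule F_eq.trans[OF F_eq.sym[OF C]])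
      then have 1: "F_eq ((sh m s w @ R) @ inv R) (R @ inv R)" by (rule F_ctxR)
      have 2: "F_eq (sh m s w @ (R @ inv R)) (sh m s w @ [])" by (rule F_ctxL[OF winv])
      have h2': "F_eq (sh m s w) ((sh m s w @ R) @ inv R)" using F_eq.sym[OF 2] by simp
      have "F_eq (sh m s w) []"
        by (rule F_eq.trans[OF F_eq.trans[OF h2' 1] winv])
      moreover have "length (sh m s w) < N"
      proof -
        obtain z where z: "z \<in> set w" "fst z = m" using min_in by auto
        have "length (filter (\<lambda>x. fst x \<noteq> m) w) < length w"
          by (rule length_filter_less[OF z(1)]) (simp add: z(2))
        then show ?thesis using len sh_len[of m s w] by simp
      qed
      moreover have "chain (sh m s w)" using sh_chain[OF ch hm, of s] s_def by simp
      moreover have "sh m s w \<noteq> []"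
      proof -
        have "fst x \<noteq> fst y" using ch w by auto
        then have "\<exists>z\<in>set w. fst z \<noteq> m" using w by auto
        then have "filter (\<lambda>x. fst x \<noteq> m) w \<noteq> []" by (auto simp: filter_empty_conv)
        then show ?thesis using sh_len[of m s w] by auto
      qed
      ultimately show False using less.IH by blast
    qed
  qed
qed

theorem lemma3p3:
  fixes a :: word
  assumes "length a \<ge> 1"
    and "\<And>i. Suc i < length a \<Longrightarrow>
           fst (a ! Suc i) = fst (a ! i) + 1 \<or> fst (a ! Suc i) + 1 = fst (a ! i)"
  shows "\<not> F_trivial a"
proof -
  have "chain a" using chain_nth assms(2) by blast
  moreover have "a \<noteq> []" using assms(1) by auto
  ultimately show ?thesis using main_lem unfolding F_trivial_def by blast
qed

end
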